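(* Let $\Lambda_1,\Lambda_2\in\mathcal{M}_2$. If $\widehat{\Lambda_1}$ or $\widehat{\Lambda_2}$ is differentiable, then $\widehat{\Lambda_1*\Lambda_2}$ is differentiable.
   Context: $\mathcal{M}_2$ is the set of bivariate tail dependence functions $\Lambda(\mathbf{w})=\lim_{s\searrow0}C(s\mathbf{w})/s$, $\mathbf{w}\in\mathbb{R}_+^2$ ($\mathbb{R}_+=[0,\infty)$), of $2$-copulas $C$; they are concave, $1$-Lipschitz and positively homogeneous of order $1$. For $\Lambda\in\mathcal{M}_2$ write $\widehat{\Lambda}(t):=\Lambda(t,1-t)$ for $t\in[0,1]$. The Markov product of $\Lambda_1,\Lambda_2\in\mathcal{M}_2$ is $(\Lambda_1*\Lambda_2)(w_1,w_2):=\int_0^\infty\partial_2\Lambda_1(w_1,t)\,\partial_1\Lambda_2(t,w_2)\,dt$, again an element of $\mathcal{M}_2$. *)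

theory Defs
  imports "HOL-Analysis.Analysis"
begin

definition copula2 :: "(real \<Rightarrow> real \<Rightarrow> real) \<Rightarrow> bool" where
  "copula2 C \<longleftrightarrow>
     (\<forall>u\<in>{0..1}. C u 0 = 0 \<and> C 0 u = 0 \<and> C u 1 = u \<and> C 1 u = u) \<and>
     (\<forall>u1\<in>{0..1}. \<forall>u2\<in>{0..1}. \<forall>v1\<in>{0..1}. \<forall>v2\<in>{0..1}.
        u1 \<le> u2 \<longrightarrow> v1 \<le> v2 \<longrightarrow> C u2 v2 - C u2 v1 - C u1 v2 + C u1 v1 \<ge> 0)"

text \<open>M_2: tail dependence functions Lambda(w) = lim_{s -> 0+} C(s w)/s on R_+^2
  of 2-copulas C (values outside R_+^2 are irrelevant).\<close>
definition M2 :: "(real \<Rightarrow> real \<Rightarrow> real) set" where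
  "M2 = {L. \<exists>C. copula2 C \<and>
           (\<forall>w1\<ge>0. \<forall>w2\<ge>0. ((\<lambda>s. C (s * w1) (s * w2) / s) \<longlongrightarrow> L w1 w2) (at_right 0))}"

definition hat :: "(real \<Rightarrow> real \<Rightarrow> real) \<Rightarrow> real \<Rightarrow> real" where
  "hat L t = L t (1 - t)"

definition markov_prod ::
  "(real \<Rightarrow> real \<Rightarrow> real) \<Rightarrow> (real \<Rightarrow> real \<Rightarrow> real) \<Rightarrow> real \<Rightarrow> real \<Rightarrow> real" where
  "markov_prod L1 L2 w1 w2 =
     (LINT t:{0<..}|lborel. deriv (\<lambda>y. L1 w1 y) t * deriv (\<lambda>x. L2 x w2) t)"

end

theory Submission
  imports Defs
begin
definition Lprops :: "(real \<Rightarrow> real \<Rightarrow> real) \<Rightarrow> bool" where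
 "Lprops L \<longleftrightarrow> (\<forall>x\<ge>0. L x 0 = 0) \<and> (\<forall>y\<ge>0. L 0 y = 0)
   \<and> (\<forall>x1 x2 y. 0 \<le> x1 \<longrightarrow> x1 \<le> x2 \<longrightarrow> 0 \<le> y \<longrightarrow> L x1 y \<le> L x2 y \<and> L x2 y - L x1 y \<le> x2 - x1)
   \<and> (\<forall>x y1 y2. 0 \<le> x \<longrightarrow> 0 \<le> y1 \<longrightarrow> y1 \<le> y2 \<longrightarrow> L x y1 \<le> L x y2 \<and> L x y2 - L x y1 \<le> y2 - y1)
   \<and> (\<forall>c>0. \<forall>x\<ge>0. \<forall>y\<ge>0. L (c*x) (c*y) = c * L x y)
   \<and> (\<forall>x1 x2 y1 y2. 0 \<le> x1 \<longrightarrow> x1 \<le> x2 \<longrightarrow> 0 \<le> y1 \<longrightarrow> y1 \<le> y2 \<longrightarrow> L x2 y2 - L x2 y1 - L x1 y2 + L x1 y1 \<ge> 0)"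

lemma copula_facts:
  assumes "copula2 C"
  shows "\<And>u. u \<in> {0..1} \<Longrightarrow> C u 0 = 0" "\<And>u. u \<in> {0..1} \<Longrightarrow> C 0 u = 0"
   and "\<And>u1 u2 v. 0 \<le> u1 \<Longrightarrow> u1 \<le> u2 \<Longrightarrow> u2 \<le> 1 \<Longrightarrow> 0 \<le> v \<Longrightarrow> v \<le> 1 \<Longrightarrow> C u1 v \<le> C u2 v \<and> C u2 v - C u1 v \<le> u2 - u1"
   and "\<And>u v1 v2. 0 \<le> v1 \<Longrightarrow> v1 \<le> v2 \<Longrightarrow> v2 \<le> 1 \<Longrightarrow> 0 \<le> u \<Longrightarrow> u \<le> 1 \<Longrightarrow> C u v1 \<le> C u v2 \<and> C u v2 - C u v1 \<le> v2 - v1"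
   and "\<And>u1 u2 v1 v2. 0 \<le> u1 \<Longrightarrow> u1 \<le> u2 \<Longrightarrow> u2 \<le> 1 \<Longrightarrow> 0 \<le> v1 \<Longrightarrow> v1 \<le> v2 \<Longrightarrow> v2 \<le> 1 \<Longrightarrow> C u2 v2 - C u2 v1 - C u1 v2 + C u1 v1 \<ge> 0"
proof -
  note b = assms[unfolded copula2_def, THEN conjunct1, rule_format]
  note r = assms[unfolded copula2_def, THEN conjunct2, rule_format]
  show "\<And>u. u \<in> {0..1} \<Longrightarrow> C u 0 = 0" "\<And>u. u \<in> {0..1} \<Longrightarrow> C 0 u = 0" using b by auto
  show "\<And>u1 u2 v1 v2. 0 \<le> u1 \<Longrightarrow> u1 \<le> u2 \<Longrightarrow> u2 \<le> 1 \<Longrightarrow> 0 \<le> v1 \<Longrightarrow> v1 \<le> v2 \<Longrightarrow> v2 \<le> 1 \<Longrightarrow> C u2 v2 - C u2 v1 - C u1 v2 + C u1 v1 \<ge> 0"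
    using r by auto
  fix u1 u2 v :: real assume h: "0 \<le> u1" "u1 \<le> u2" "u2 \<le> 1" "0 \<le> v" "v \<le> 1"
  have 1: "C u2 v - C u2 0 - C u1 v + C u1 0 \<ge> 0" using r[of u1 u2 0 v] h by auto
  have 2: "C u2 1 - C u2 v - C u1 1 + C u1 v \<ge> 0" using r[of u1 u2 v 1] h by auto
  show "C u1 v \<le> C u2 v \<and> C u2 v - C u1 v \<le> u2 - u1"
    using 1 2 b[of u1] b[of u2] h by auto
  show "C v u1 \<le> C v u2 \<and> C v u2 - C v u1 \<le> u2 - u1"
    using r[of 0 v u1 u2] r[of v 1 u1 u2] b[of u1] b[of u2] b[of v] h by auto
qed

lemma ev_small0: "0 \<le> (M::real) \<Longrightarrow> \<forall>\<^sub>F s in at_right 0. 0 < s \<and> s * M \<le> 1"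
  unfolding eventually_at_right_field
  apply (rule exI[of _ "1/(M+1)"])
  by (auto simp: field_simps)

lemma ev_small: "\<forall>\<^sub>F s in at_right 0. 0 < s \<and> s * \<bar>M::real\<bar> \<le> 1"
  by (rule ev_small0) simp

lemma lim_ge0: "((f::real\<Rightarrow>real) \<longlongrightarrow> a) (at_right (0::real)) \<Longrightarrow> \<forall>\<^sub>F s in at_right 0. 0 \<le> f s \<Longrightarrow> 0 \<le> a"
  using tendsto_lowerbound[of f a "at_right 0" 0] by simp

lemma at_right_scale: assumes "0 < (c::real)" shows "filterlim (\<lambda>s. c * s) (at_right 0) (at_right 0)"
proof -
  have "((\<lambda>s. c * s) \<longlongrightarrow> c * 0) (at_right (0::real))" by (intro tendsto_intros)
  then show ?thesis using assms
    by (auto simp: filterlim_at eventually_at_right_field intro: exI[of _ 1])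
qed

lemma M2_Lprops:
  assumes "L \<in> M2" shows "Lprops L"
proof -
  obtain C where cop: "copula2 C" and lim: "\<And>w1 w2. w1 \<ge> 0 \<Longrightarrow> w2 \<ge> 0 \<Longrightarrow>
      ((\<lambda>s. C (s * w1) (s * w2) / s) \<longlongrightarrow> L w1 w2) (at_right 0)"
    using assms unfolding M2_def by auto
  note cf = copula_facts[OF cop]
  have pos: "s * w \<le> 1" if "0 < s" "s * \<bar>M\<bar> \<le> 1" "0 \<le> w" "w \<le> M" for s w M :: real
    by (smt (verit) mult_left_mono that)
  have g1: "L x 0 = 0" if "x \<ge> 0" for x
  proof -
    have "\<forall>\<^sub>F s in at_right 0. C (s * x) (s * 0) / s = 0"
      using ev_small[of x]
    proof (elim eventually_mono)
      fix s :: real assume "0 < s \<and> s * \<bar>x\<bar> \<le> 1"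
      moreover have "\<bar>x\<bar> = x" using that by simp
      ultimately have "s * x \<in> {0..1}" using that by simp
      then show "C (s * x) (s * 0) / s = 0" using cf(1) by simp
    qed
    then have z: "((\<lambda>s. C (s * x) (s * 0) / s) \<longlongrightarrow> 0) (at_right 0)"
      by (simp add: tendsto_eventually)
    show ?thesis using tendsto_unique[OF trivial_limit_at_right_real z lim[of x 0]] that by simp
  qed
  have g2: "L 0 y = 0" if "y \<ge> 0" for y
  proof -
    have "\<forall>\<^sub>F s in at_right 0. C (s * 0) (s * y) / s = 0"
      using ev_small[of y]
    proof (elim eventually_mono)
      fix s :: real assume "0 < s \<and> s * \<bar>y\<bar> \<le> 1"
      moreover have "\<bar>y\<bar> = y" using that by simp
      ultimately have "s * y \<in> {0..1}" using that by simp
      then show "C (s * 0) (s * y) / s = 0" using cf(2) by simp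
    qed
    then have z: "((\<lambda>s. C (s * 0) (s * y) / s) \<longlongrightarrow> 0) (at_right 0)"
      by (simp add: tendsto_eventually)
    show ?thesis using tendsto_unique[OF trivial_limit_at_right_real z lim[of 0 y]] that by simp
  qed
  have m1: "L x1 y \<le> L x2 y \<and> L x2 y - L x1 y \<le> x2 - x1" if "0 \<le> x1" "x1 \<le> x2" "0 \<le> y" for x1 x2 y
  proof -
    have t: "((\<lambda>s. C (s * x2) (s * y) / s - C (s * x1) (s * y) / s) \<longlongrightarrow> L x2 y - L x1 y) (at_right 0)" (is "(_ \<longlongrightarrow> ?A) _")
      using that by (intro tendsto_diff lim) auto
    have t2: "((\<lambda>s. (x2 - x1) - (C (s * x2) (s * y) / s - C (s * x1) (s * y) / s)) \<longlongrightarrow> (x2 - x1) - (L x2 y - L x1 y)) (at_right 0)" (is "(_ \<longlongrightarrow> ?B) _")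
      by (intro tendsto_diff t tendsto_const)
    have e: "\<forall>\<^sub>F s in at_right 0. 0 \<le> C (s * x2) (s * y) / s - C (s * x1) (s * y) / s \<and>
        0 \<le> (x2 - x1) - (C (s * x2) (s * y) / s - C (s * x1) (s * y) / s)"
      using ev_small[of "x2 + y"]
    proof eventually_elim
      case (elim s)
      then have "s * x2 \<le> 1" "s * y \<le> 1" using pos[of s "x2+y"] that by auto
      then have c: "C (s * x1) (s * y) \<le> C (s * x2) (s * y) \<and> C (s * x2) (s * y) - C (s * x1) (s * y) \<le> s * x2 - s * x1"
        using elim that by (intro cf(3)) (auto intro: mult_left_mono)
      have "C (s * x2) (s * y) / s - C (s * x1) (s * y) / s = (C (s * x2) (s * y) - C (s * x1) (s * y)) / s"
        by (simp add: diff_divide_distrib)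
      moreover have "(C (s * x2) (s * y) - C (s * x1) (s * y)) / s \<le> x2 - x1"
      proof -
        have "(C (s * x2) (s * y) - C (s * x1) (s * y)) / s \<le> (s * x2 - s * x1) / s"
          using c elim by (intro divide_right_mono) auto
        also have "\<dots> = x2 - x1" using elim by (simp add: field_simps)
        finally show ?thesis .
      qed
      ultimately show ?case using c elim by auto
    qed
    have "0 \<le> ?A" by (rule lim_ge0[OF t], rule eventually_mono[OF e], blast)
    moreover have "0 \<le> ?B" by (rule lim_ge0[OF t2], rule eventually_mono[OF e], blast)
    ultimately show ?thesis by auto
  qed
  have m2: "L x y1 \<le> L x y2 \<and> L x y2 - L x y1 \<le> y2 - y1" if "0 \<le> y1" "y1 \<le> y2" "0 \<le> x" for x y1 y2
  proof -
    have t: "((\<lambda>s. C (s * x) (s * y2) / s - C (s * x) (s * y1) / s) \<longlongrightarrow> L x y2 - L x y1) (at_right 0)" (is "(_ \<longlongrightarrow> ?A) _")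
      using that by (intro tendsto_diff lim) auto
    have t2: "((\<lambda>s. (y2 - y1) - (C (s * x) (s * y2) / s - C (s * x) (s * y1) / s)) \<longlongrightarrow> (y2 - y1) - (L x y2 - L x y1)) (at_right 0)" (is "(_ \<longlongrightarrow> ?B) _")
      by (intro tendsto_diff t tendsto_const)
    have e: "\<forall>\<^sub>F s in at_right 0. 0 \<le> C (s * x) (s * y2) / s - C (s * x) (s * y1) / s \<and>
        0 \<le> (y2 - y1) - (C (s * x) (s * y2) / s - C (s * x) (s * y1) / s)"
      using ev_small[of "y2 + x"]
    proof eventually_elim
      case (elim s)
      then have "s * y2 \<le> 1" "s * x \<le> 1" using pos[of s "y2+x"] that by auto
      then have c: "C (s * x) (s * y1) \<le> C (s * x) (s * y2) \<and> C (s * x) (s * y2) - C (s * x) (s * y1) \<le> s * y2 - s * y1"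
        using elim that by (intro cf(4)) (auto intro: mult_left_mono)
      have "C (s * x) (s * y2) / s - C (s * x) (s * y1) / s = (C (s * x) (s * y2) - C (s * x) (s * y1)) / s"
        by (simp add: diff_divide_distrib)
      moreover have "(C (s * x) (s * y2) - C (s * x) (s * y1)) / s \<le> y2 - y1"
      proof -
        have "(C (s * x) (s * y2) - C (s * x) (s * y1)) / s \<le> (s * y2 - s * y1) / s"
          using c elim by (intro divide_right_mono) auto
        also have "\<dots> = y2 - y1" using elim by (simp add: field_simps)
        finally show ?thesis .
      qed
      ultimately show ?case using c elim by auto
    qed
    have "0 \<le> ?A" by (rule lim_ge0[OF t], rule eventually_mono[OF e], blast)
    moreover have "0 \<le> ?B" by (rule lim_ge0[OF t2], rule eventually_mono[OF e], blast)
    ultimately show ?thesis by auto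
  qed
  have hom: "L (c*x) (c*y) = c * L x y" if "c > 0" "x \<ge> 0" "y \<ge> 0" for c x y
  proof -
    have a: "((\<lambda>s. C (s * (c*x)) (s * (c*y)) / s) \<longlongrightarrow> L (c*x) (c*y)) (at_right 0)"
      using that by (intro lim) auto
    have "((\<lambda>s. C ((c * s) * x) ((c * s) * y) / (c * s)) \<longlongrightarrow> L x y) (at_right 0)"
      using filterlim_compose[OF lim[OF that(2,3)] at_right_scale[OF that(1)]] .
    then have conv: "((\<lambda>s. c * (C ((c * s) * x) ((c * s) * y) / (c * s))) \<longlongrightarrow> c * L x y) (at_right 0)"
      by (intro tendsto_mult tendsto_const)
    have ev: "\<forall>\<^sub>F s in at_right 0. c * (C ((c * s) * x) ((c * s) * y) / (c * s)) = C (s * (c*x)) (s * (c*y)) / s"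
      using ev_small[of 0]
    proof (elim eventually_mono)
      fix s :: real assume "0 < s \<and> s * \<bar>0\<bar> \<le> 1"
      then have s: "s \<noteq> 0" by auto
      have e1: "(c * s) * x = s * (c * x)" "(c * s) * y = s * (c * y)" by (simp_all add: ac_simps)
      show "c * (C ((c * s) * x) ((c * s) * y) / (c * s)) = C (s * (c*x)) (s * (c*y)) / s"
        unfolding e1 using s \<open>c > 0\<close> by simp
    qed
    have z: "((\<lambda>s. C (s * (c*x)) (s * (c*y)) / s) \<longlongrightarrow> c * L x y) (at_right 0)"
      by (rule tendsto_cong[THEN iffD1, OF ev conv])
    show ?thesis using tendsto_unique[OF trivial_limit_at_right_real a z] by simp
  qed
  have inc: "L x2 y2 - L x2 y1 - L x1 y2 + L x1 y1 \<ge> 0"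
    if "0 \<le> x1" "x1 \<le> x2" "0 \<le> y1" "y1 \<le> y2" for x1 x2 y1 y2
  proof -
    have t: "((\<lambda>s. C (s * x2) (s * y2) / s - C (s * x2) (s * y1) / s - C (s * x1) (s * y2) / s + C (s * x1) (s * y1) / s)
       \<longlongrightarrow> L x2 y2 - L x2 y1 - L x1 y2 + L x1 y1) (at_right 0)"
      using that by (intro tendsto_diff tendsto_add lim) auto
    have e: "\<forall>\<^sub>F s in at_right 0. 0 \<le> C (s * x2) (s * y2) / s - C (s * x2) (s * y1) / s - C (s * x1) (s * y2) / s + C (s * x1) (s * y1) / s"
      using ev_small[of "x2 + y2"]
    proof eventually_elim
      case (elim s)
      then have "s * x2 \<le> 1" "s * y2 \<le> 1" using pos[of s "x2+y2"] that by auto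
      then have c: "0 \<le> C (s * x2) (s * y2) - C (s * x2) (s * y1) - C (s * x1) (s * y2) + C (s * x1) (s * y1)"
        using elim that by (intro cf(5)) (auto intro: mult_left_mono)
      have "C (s * x2) (s * y2) / s - C (s * x2) (s * y1) / s - C (s * x1) (s * y2) / s + C (s * x1) (s * y1) / s
         = (C (s * x2) (s * y2) - C (s * x2) (s * y1) - C (s * x1) (s * y2) + C (s * x1) (s * y1)) / s"
        by (simp add: diff_divide_distrib add_divide_distrib)
      then show ?case using c elim by simp
    qed
    show ?thesis using lim_ge0[OF t e] .
  qed
  show ?thesis unfolding Lprops_def
    apply (intro conjI allI impI)
    subgoal using g1 by blast
    subgoal using g2 by blast
    subgoal using m1 by blast
    subgoal using m1 by blast
    subgoal using m2 by blast
    subgoal using m2 by blast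
    subgoal using hom by blast
    subgoal using inc by blast
    done
qed

lemma geo_chord:
  fixes f :: "real \<Rightarrow> real"
  assumes cont: "continuous_on {0..} f"
    and geo: "\<And>z r. 0 < z \<Longrightarrow> 1 < r \<Longrightarrow> r * f (z / r) + f (r * z) \<le> (1 + r) * f z"
    and abc: "0 \<le> a" "a < b" "b < c"
  shows "((c - b) * f a + (b - a) * f c) / (c - a) \<le> f b"
proof (rule ccontr)
  assume neg: "\<not> ?thesis"
  define k where "k = (f c - f a) / (c - a)"
  define D where "D z = f z - (f a + k * (z - a))" for z
  have Da: "D a = 0" by (simp add: D_def)
  have Dc: "D c = 0" using abc by (simp add: D_def k_def field_simps)
  have Db: "D b < 0"
  proof -
    have "((c - b) * f a + (b - a) * f c) / (c - a) = f a + k * (b - a)"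
      using abc by (simp add: k_def field_simps)
    then show ?thesis using neg by (simp add: D_def)
  qed
  have contD: "continuous_on {a..c} D"
    unfolding D_def using abc
    by (intro continuous_intros continuous_on_subset[OF cont]) auto
  obtain zm where zm: "zm \<in> {a..c}" "\<And>y. y \<in> {a..c} \<Longrightarrow> D zm \<le> D y"
    using continuous_attains_inf[OF compact_Icc _ contD] abc by auto
  define m where "m = D zm"
  have mneg: "m < 0" using zm(2)[of b] Db abc by (simp add: m_def)
  define S where "S = {z \<in> {a..c}. D z = m}"
  have Sne: "S \<noteq> {}" using zm by (auto simp: S_def m_def)
  have Scl: "closed S" unfolding S_def by (rule continuous_closed_preimage_constant[OF contD]) simp
  have Sbdd: "bdd_below S" unfolding S_def by (auto intro!: bdd_belowI[of _ a])
  define z0 where "z0 = Inf S"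
  have z0S: "z0 \<in> S" unfolding z0_def by (rule closed_contains_Inf[OF Sne Sbdd Scl])
  have z0m: "D z0 = m" "a \<le> z0" "z0 \<le> c" using z0S by (auto simp: S_def)
  have "z0 \<noteq> a" "z0 \<noteq> c" using z0m(1) Da Dc mneg by auto
  then have z0: "a < z0" "z0 < c" "D z0 = m" using z0m by auto
  define h where "h = (a + z0) / 2"
  have h: "0 < h" "h < z0" "a \<le> h" using z0 abc by (auto simp: h_def)
  define r where "r = min (c / z0) (z0 / h)"
  have z0pos: "0 < z0" using h by simp
  have r1: "1 < r" using z0 h z0pos by (auto simp: r_def field_simps)
  have rpos: "0 < r" using r1 by simp
  have "r \<le> c / z0" by (simp add: r_def)
  then have rz: "r * z0 \<le> c" using z0pos by (simp add: pos_le_divide_eq)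
  have zr: "h \<le> z0 / r"
  proof -
    have "r \<le> z0 / h" by (simp add: r_def)
    then have "r * h \<le> z0" using h by (simp add: pos_le_divide_eq)
    then show ?thesis using rpos by (simp add: pos_le_divide_eq mult.commute)
  qed
  have zlt: "z0 / r < z0" using z0pos r1 by (simp add: divide_less_eq)
  have zgt: "z0 < r * z0" using z0pos r1 by simp
  have in1: "z0 / r \<in> {a..c}" using zr h(3) zlt z0(2) by auto
  have in2: "r * z0 \<in> {a..c}" using rz zgt z0(1) by auto
  define w where "w = z0 / r"
  have z0w: "z0 = r * w" using rpos by (simp add: w_def)
  have lin: "r * (f a + k * (w - a)) + (f a + k * (r * z0 - a)) = (1 + r) * (f a + k * (z0 - a))"
    unfolding z0w by (simp add: algebra_simps)
  have g: "r * f w + f (r * z0) \<le> (1 + r) * f z0" using geo[OF z0pos r1] by (simp add: w_def)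
  have d1: "r * D w = r * f w - r * (f a + k * (w - a))" by (simp add: D_def right_diff_distrib)
  have d2: "(1 + r) * D z0 = (1 + r) * f z0 - (1 + r) * (f a + k * (z0 - a))" by (simp add: D_def right_diff_distrib)
  have d3: "D (r * z0) = f (r * z0) - (f a + k * (r * z0 - a))" by (simp add: D_def)
  have "r * D (z0 / r) + D (r * z0) \<le> (1 + r) * D z0"
    unfolding w_def[symmetric] using lin g d1 d2 d3 by linarith
  moreover have "m \<le> D (r * z0)" using zm(2)[OF in2] by (simp add: m_def)
  ultimately have "r * D (z0 / r) \<le> r * m" using z0(3) by (simp add: algebra_simps)
  then have "D (z0 / r) \<le> m" using rpos by simp
  moreover have "m \<le> D (z0 / r)" using zm(2)[OF in1] by (simp add: m_def)
  ultimately have "z0 / r \<in> S" using in1 by (auto simp: S_def)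
  then have "z0 \<le> z0 / r" unfolding z0_def by (rule cInf_lower[OF _ Sbdd])
  then show False using zlt by simp
qed

lemma LpD:
  assumes "Lprops L"
  shows "\<And>x. x \<ge> 0 \<Longrightarrow> L x 0 = 0" "\<And>y. y \<ge> 0 \<Longrightarrow> L 0 y = 0"
   "\<And>x1 x2 y. 0 \<le> x1 \<Longrightarrow> x1 \<le> x2 \<Longrightarrow> 0 \<le> y \<Longrightarrow> L x1 y \<le> L x2 y"
   "\<And>x1 x2 y. 0 \<le> x1 \<Longrightarrow> x1 \<le> x2 \<Longrightarrow> 0 \<le> y \<Longrightarrow> L x2 y - L x1 y \<le> x2 - x1"
   "\<And>x y1 y2. 0 \<le> x \<Longrightarrow> 0 \<le> y1 \<Longrightarrow> y1 \<le> y2 \<Longrightarrow> L x y1 \<le> L x y2"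
   "\<And>x y1 y2. 0 \<le> x \<Longrightarrow> 0 \<le> y1 \<Longrightarrow> y1 \<le> y2 \<Longrightarrow> L x y2 - L x y1 \<le> y2 - y1"
   "\<And>c x y. c > 0 \<Longrightarrow> x \<ge> 0 \<Longrightarrow> y \<ge> 0 \<Longrightarrow> L (c*x) (c*y) = c * L x y"
   "\<And>x1 x2 y1 y2. 0 \<le> x1 \<Longrightarrow> x1 \<le> x2 \<Longrightarrow> 0 \<le> y1 \<Longrightarrow> y1 \<le> y2 \<Longrightarrow> L x2 y2 - L x2 y1 - L x1 y2 + L x1 y1 \<ge> 0"
proof -
  note a = assms[unfolded Lprops_def]
  note a1 = a[THEN conjunct1, rule_format]
  note a2 = a[THEN conjunct2, THEN conjunct1, rule_format]
  note a3 = a[THEN conjunct2, THEN conjunct2, THEN conjunct1, rule_format]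
  note a4 = a[THEN conjunct2, THEN conjunct2, THEN conjunct2, THEN conjunct1, rule_format]
  note a5 = a[THEN conjunct2, THEN conjunct2, THEN conjunct2, THEN conjunct2, THEN conjunct1, rule_format]
  note a6 = a[THEN conjunct2, THEN conjunct2, THEN conjunct2, THEN conjunct2, THEN conjunct2, rule_format]
  show "\<And>x. x \<ge> 0 \<Longrightarrow> L x 0 = 0" by (rule a1)
  show "\<And>y. y \<ge> 0 \<Longrightarrow> L 0 y = 0" by (rule a2)
  show "\<And>x1 x2 y. 0 \<le> x1 \<Longrightarrow> x1 \<le> x2 \<Longrightarrow> 0 \<le> y \<Longrightarrow> L x1 y \<le> L x2 y"
    using a3 by (rule conjunct1)
  show "\<And>x1 x2 y. 0 \<le> x1 \<Longrightarrow> x1 \<le> x2 \<Longrightarrow> 0 \<le> y \<Longrightarrow> L x2 y - L x1 y \<le> x2 - x1"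
    using a3 by (rule conjunct2)
  show "\<And>x y1 y2. 0 \<le> x \<Longrightarrow> 0 \<le> y1 \<Longrightarrow> y1 \<le> y2 \<Longrightarrow> L x y1 \<le> L x y2"
    using a4 by (rule conjunct1)
  show "\<And>x y1 y2. 0 \<le> x \<Longrightarrow> 0 \<le> y1 \<Longrightarrow> y1 \<le> y2 \<Longrightarrow> L x y2 - L x y1 \<le> y2 - y1"
    using a4 by (rule conjunct2)
  show "\<And>c x y. c > 0 \<Longrightarrow> x \<ge> 0 \<Longrightarrow> y \<ge> 0 \<Longrightarrow> L (c*x) (c*y) = c * L x y" by (rule a5)
  show "\<And>x1 x2 y1 y2. 0 \<le> x1 \<Longrightarrow> x1 \<le> x2 \<Longrightarrow> 0 \<le> y1 \<Longrightarrow> y1 \<le> y2 \<Longrightarrow> L x2 y2 - L x2 y1 - L x1 y2 + L x1 y1 \<ge> 0"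
    by (rule a6)
qed

lemma LpI:
  assumes "\<And>x. x \<ge> 0 \<Longrightarrow> L x 0 = 0" "\<And>y. y \<ge> 0 \<Longrightarrow> L 0 y = 0"
   "\<And>x1 x2 y. 0 \<le> x1 \<Longrightarrow> x1 \<le> x2 \<Longrightarrow> 0 \<le> y \<Longrightarrow> L x1 y \<le> L x2 y"
   "\<And>x1 x2 y. 0 \<le> x1 \<Longrightarrow> x1 \<le> x2 \<Longrightarrow> 0 \<le> y \<Longrightarrow> L x2 y - L x1 y \<le> x2 - x1"
   "\<And>x y1 y2. 0 \<le> x \<Longrightarrow> 0 \<le> y1 \<Longrightarrow> y1 \<le> y2 \<Longrightarrow> L x y1 \<le> L x y2"
   "\<And>x y1 y2. 0 \<le> x \<Longrightarrow> 0 \<le> y1 \<Longrightarrow> y1 \<le> y2 \<Longrightarrow> L x y2 - L x y1 \<le> y2 - y1"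
   "\<And>c x y. c > 0 \<Longrightarrow> x \<ge> 0 \<Longrightarrow> y \<ge> 0 \<Longrightarrow> L (c*x) (c*y) = c * L x y"
   "\<And>x1 x2 y1 y2. 0 \<le> x1 \<Longrightarrow> x1 \<le> x2 \<Longrightarrow> 0 \<le> y1 \<Longrightarrow> y1 \<le> y2 \<Longrightarrow> L x2 y2 - L x2 y1 - L x1 y2 + L x1 y1 \<ge> 0"
  shows "Lprops L"
  unfolding Lprops_def
  apply (intro conjI allI impI)
  using assms by simp_all

lemma Lprops_transp: assumes L: "Lprops L" shows "Lprops (\<lambda>x y. L y x)"
  apply (rule LpI)
  subgoal by (rule LpD(2)[OF L])
  subgoal by (rule LpD(1)[OF L])
  subgoal by (rule LpD(5)[OF L])
  subgoal by (rule LpD(6)[OF L])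
  subgoal by (rule LpD(3)[OF L])
  subgoal by (rule LpD(4)[OF L])
  subgoal by (rule LpD(7)[OF L])
  subgoal for x1 x2 y1 y2 using LpD(8)[OF L, of y1 y2 x1 x2] by linarith
  done

lemma Lp_nonneg: "Lprops L \<Longrightarrow> 0 \<le> x \<Longrightarrow> 0 \<le> y \<Longrightarrow> 0 \<le> L x y"
  using LpD(2)[of L y] LpD(3)[of L 0 x y] by simp

lemma Lp_abs1: "Lprops L \<Longrightarrow> 0 \<le> x1 \<Longrightarrow> 0 \<le> x2 \<Longrightarrow> 0 \<le> y \<Longrightarrow> \<bar>L x2 y - L x1 y\<bar> \<le> \<bar>x2 - x1\<bar>"
proof (cases "x1 \<le> x2")
  case True
  assume a: "Lprops L" "0 \<le> x1" "0 \<le> x2" "0 \<le> y"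
  have "L x1 y \<le> L x2 y" "L x2 y - L x1 y \<le> x2 - x1" using LpD(3,4)[OF a(1) a(2) True a(4)] by auto
  then show ?thesis using True by (simp add: abs_le_iff)
next
  case False
  assume a: "Lprops L" "0 \<le> x1" "0 \<le> x2" "0 \<le> y"
  have F: "x2 \<le> x1" using False by simp
  have "L x2 y \<le> L x1 y" "L x1 y - L x2 y \<le> x1 - x2" using LpD(3,4)[OF a(1) a(3) F a(4)] by auto
  then show ?thesis using F by (simp add: abs_le_iff)
qed

lemma Lp_abs2: "Lprops L \<Longrightarrow> 0 \<le> x \<Longrightarrow> 0 \<le> y1 \<Longrightarrow> 0 \<le> y2 \<Longrightarrow> \<bar>L x y2 - L x y1\<bar> \<le> \<bar>y2 - y1\<bar>"
proof (cases "y1 \<le> y2")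
  case True
  assume a: "Lprops L" "0 \<le> x" "0 \<le> y1" "0 \<le> y2"
  have "L x y1 \<le> L x y2" "L x y2 - L x y1 \<le> y2 - y1" using LpD(5,6)[OF a(1) a(2) a(3) True] by auto
  then show ?thesis using True by (simp add: abs_le_iff)
next
  case False
  assume a: "Lprops L" "0 \<le> x" "0 \<le> y1" "0 \<le> y2"
  have F: "y2 \<le> y1" using False by simp
  have "L x y2 \<le> L x y1" "L x y1 - L x y2 \<le> y1 - y2" using LpD(5,6)[OF a(1) a(2) a(4) F] by auto
  then show ?thesis using F by (simp add: abs_le_iff)
qed

lemma Lp_cont1: "Lprops L \<Longrightarrow> 0 \<le> y \<Longrightarrow> continuous_on {0..} (\<lambda>x. L x y)"
  unfolding continuous_on_iff
  apply (intro ballI allI impI)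
  subgoal for x e by (rule exI[of _ e]) (auto simp: dist_real_def intro: le_less_trans[OF Lp_abs1])
  done

lemma Lp_cont2: "Lprops L \<Longrightarrow> 0 \<le> x \<Longrightarrow> continuous_on {0..} (\<lambda>y. L x y)"
  unfolding continuous_on_iff
  apply (intro ballI allI impI)
  subgoal for y e by (rule exI[of _ e]) (auto simp: dist_real_def intro: le_less_trans[OF Lp_abs2])
  done

lemma Lp_chord1:
  assumes L: "Lprops L" and y: "0 \<le> y" and abc: "0 \<le> a" "a < b" "b < c"
  shows "((c - b) * L a y + (b - a) * L c y) / (c - a) \<le> L b y"
proof (rule geo_chord[OF Lp_cont1[OF L y] _ abc])
  fix z r :: real assume z: "0 < z" and r: "1 < r"
  have yr: "y \<le> r * y" using mult_right_mono[of 1 r y] y r by simp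
  have zr: "z \<le> r * z" using mult_right_mono[of 1 r z] z r by simp
  have "L (r*z) (r*y) - L (r*z) y - L z (r*y) + L z y \<ge> 0"
    using LpD(8)[OF L, of z "r*z" y "r*y"] z y yr zr by auto
  moreover have "L (r*z) (r*y) = r * L z y" using LpD(7)[OF L, of r z y] z r y by auto
  moreover have "L z (r*y) = r * L (z/r) y"
    using LpD(7)[OF L, of r "z/r" y] z r y by auto
  ultimately show "r * L (z / r) y + L (r * z) y \<le> (1 + r) * L z y"
    by (simp add: algebra_simps)
qed

lemma Lp_chord2:
  assumes L: "Lprops L" and x: "0 \<le> x" and abc: "0 \<le> a" "a < b" "b < c"
  shows "((c - b) * L x a + (b - a) * L x c) / (c - a) \<le> L x b"
  using Lp_chord1[OF Lprops_transp[OF L] x abc] by simp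

definition concB :: "(real \<Rightarrow> real) \<Rightarrow> bool" where
  "concB B \<longleftrightarrow> (\<forall>a b c. 0 \<le> a \<longrightarrow> a < b \<longrightarrow> b < c \<longrightarrow> ((c - b) * B a + (b - a) * B c) / (c - a) \<le> B b)
     \<and> (\<forall>x y. 0 \<le> x \<longrightarrow> x \<le> y \<longrightarrow> B x \<le> B y) \<and> (\<forall>x y. 0 \<le> x \<longrightarrow> x \<le> y \<longrightarrow> B y - B x \<le> y - x)
     \<and> B 0 = 0 \<and> (\<forall>x\<ge>0. B x \<le> 1)"

lemma concBD:
  assumes "concB B"
  shows "\<And>a b c. 0 \<le> a \<Longrightarrow> a < b \<Longrightarrow> b < c \<Longrightarrow> ((c - b) * B a + (b - a) * B c) / (c - a) \<le> B b"
    "\<And>x y. 0 \<le> x \<Longrightarrow> x \<le> y \<Longrightarrow> B x \<le> B y" "\<And>x y. 0 \<le> x \<Longrightarrow> x \<le> y \<Longrightarrow> B y - B x \<le> y - x"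
    "B 0 = 0" "\<And>x. 0 \<le> x \<Longrightarrow> B x \<le> 1"
proof -
  note a = assms[unfolded concB_def]
  show "\<And>a b c. 0 \<le> a \<Longrightarrow> a < b \<Longrightarrow> b < c \<Longrightarrow> ((c - b) * B a + (b - a) * B c) / (c - a) \<le> B b"
    by (rule a[THEN conjunct1, rule_format])
  show "\<And>x y. 0 \<le> x \<Longrightarrow> x \<le> y \<Longrightarrow> B x \<le> B y"
    by (rule a[THEN conjunct2, THEN conjunct1, rule_format])
  show "\<And>x y. 0 \<le> x \<Longrightarrow> x \<le> y \<Longrightarrow> B y - B x \<le> y - x"
    by (rule a[THEN conjunct2, THEN conjunct2, THEN conjunct1, rule_format])
  show "B 0 = 0" by (rule a[THEN conjunct2, THEN conjunct2, THEN conjunct2, THEN conjunct1])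
  show "\<And>x. 0 \<le> x \<Longrightarrow> B x \<le> 1" by (rule a[THEN conjunct2, THEN conjunct2, THEN conjunct2, THEN conjunct2, rule_format])
qed

lemma Lp_concB: assumes L: "Lprops L" shows "concB (\<lambda>x. L x 1)"
  unfolding concB_def
proof (intro conjI allI impI)
  fix a b c :: real assume "0 \<le> a" "a < b" "b < c"
  then show "((c - b) * L a 1 + (b - a) * L c 1) / (c - a) \<le> L b 1" using Lp_chord1[OF L, of 1 a b c] by simp
next
  fix x y :: real assume "0 \<le> x" "x \<le> y"
  then show "L x 1 \<le> L y 1" "L y 1 - L x 1 \<le> y - x" using LpD(3,4)[OF L, of x y 1] by auto
next
  show "L 0 1 = 0" using LpD(2)[OF L, of 1] by simp
next
  fix x :: real assume "0 \<le> x"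
  then show "L x 1 \<le> 1" using LpD(6)[OF L, of x 0 1] LpD(1)[OF L, of x] by simp
qed

lemma slope_le:
  assumes B: "concB B" and abc: "0 \<le> a" "a < b" "b < c"
  shows "(B c - B b) / (c - b) \<le> (B b - B a) / (b - a)"
proof -
  have h: "((c - b) * B a + (b - a) * B c) / (c - a) \<le> B b" by (rule concBD(1)[OF B abc])
  then have "(c - b) * B a + (b - a) * B c \<le> B b * (c - a)" using abc by (simp add: pos_divide_le_eq)
  then have "(B c - B b) * (b - a) \<le> (B b - B a) * (c - b)" by (simp add: algebra_simps)
  moreover have p: "0 < c - b" "0 < b - a" using abc by auto
  ultimately show ?thesis by (simp add: field_simps)
qed

definition rd :: "(real \<Rightarrow> real) \<Rightarrow> real \<Rightarrow> real" where
  "rd B v = (if v \<le> 0 then 1 else Sup ((\<lambda>w. (B w - B v) / (w - v)) ` {v<..}))"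

lemma slope_01:
  assumes B: "concB B" and "0 \<le> v" "v < w"
  shows "0 \<le> (B w - B v) / (w - v)" "(B w - B v) / (w - v) \<le> 1"
proof -
  have "B v \<le> B w" "B w - B v \<le> w - v" using concBD(2,3)[OF B, of v w] assms by auto
  then show "0 \<le> (B w - B v) / (w - v)" "(B w - B v) / (w - v) \<le> 1" using assms by (auto simp: divide_le_eq_1)
qed

lemma rd_bdd: assumes B: "concB B" and v: "0 < v"
  shows "bdd_above ((\<lambda>w. (B w - B v) / (w - v)) ` {v<..})"
  using slope_01(2)[OF B] v by (intro bdd_aboveI[of _ 1]) auto

lemma rd_ub: assumes B: "concB B" and "0 < v" "v < w"
  shows "(B w - B v) / (w - v) \<le> rd B v"
  using assms unfolding rd_def by (auto intro!: cSup_upper rd_bdd[OF B])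

lemma rd_le1: assumes B: "concB B" shows "rd B v \<le> 1"
proof (cases "v \<le> 0")
  case False
  then show ?thesis unfolding rd_def using slope_01(2)[OF B, of v] by (auto intro!: cSup_least)
qed (simp add: rd_def)

lemma rd_ge0: assumes B: "concB B" shows "0 \<le> rd B v"
proof (cases "v \<le> 0")
  case False
  then have "(B (v+1) - B v) / ((v+1) - v) \<le> rd B v" by (intro rd_ub[OF B]) auto
  moreover have "0 \<le> (B (v+1) - B v) / ((v+1) - v)" using False by (intro slope_01(1)[OF B]) auto
  ultimately show ?thesis by linarith
qed (simp add: rd_def)

lemma rd_lb: assumes B: "concB B" and uv: "0 \<le> u" "u < v"
  shows "rd B v \<le> (B v - B u) / (v - u)"
proof -
  have "v > 0" using uv by simp
  then show ?thesis unfolding rd_def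
    using slope_le[OF B uv] by (auto intro!: cSup_least)
qed

lemma rd_anti: assumes B: "concB B" and "x \<le> y" shows "rd B y \<le> rd B x"
proof (cases "x \<le> 0")
  case True
  then show ?thesis using rd_le1[OF B, of y] by (simp add: rd_def)
next
  case False
  show ?thesis
  proof (cases "x = y")
    case False
    then have "x < y" using assms by simp
    then show ?thesis using rd_lb[OF B, of x y] rd_ub[OF B, of x y] \<open>\<not> x \<le> 0\<close> by simp
  qed simp
qed

lemma rd_small: assumes B: "concB B" and v: "0 < v" shows "rd B v \<le> 1 / v"
proof -
  have "rd B v \<le> (B v - B 0) / (v - 0)" using rd_lb[OF B, of 0 v] v by simp
  also have "\<dots> \<le> 1 / v" using concBD(5)[OF B, of v] concBD(4)[OF B] v by (simp add: divide_right_mono)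
  finally show ?thesis .
qed

lemma rd_deriv:
  assumes B: "concB B" and v: "0 < v" and c: "isCont (rd B) v"
  shows "(B has_real_derivative rd B v) (at v)"
  unfolding has_field_derivative_iff
proof (subst filterlim_at_split, intro conjI)
  have cl: "(rd B \<longlongrightarrow> rd B v) (at_left v)" and cr: "(rd B \<longlongrightarrow> rd B v) (at_right v)"
    using c unfolding isCont_def filterlim_at_split by auto
  show "((\<lambda>y. (B y - B v) / (y - v)) \<longlongrightarrow> rd B v) (at_right v)"
  proof (rule tendsto_sandwich[OF _ _ cr tendsto_const])
    show "\<forall>\<^sub>F y in at_right v. rd B y \<le> (B y - B v) / (y - v)"
      unfolding eventually_at_right_field using v by (auto intro!: exI[of _ "v+1"] rd_lb[OF B])
    show "\<forall>\<^sub>F y in at_right v. (B y - B v) / (y - v) \<le> rd B v"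
      unfolding eventually_at_right_field using v by (auto intro!: exI[of _ "v+1"] rd_ub[OF B])
  qed
  show "((\<lambda>y. (B y - B v) / (y - v)) \<longlongrightarrow> rd B v) (at_left v)"
  proof (rule tendsto_sandwich[OF _ _ tendsto_const cl])
    have eq: "(B y - B v) / (y - v) = (B v - B y) / (v - y)" for y
      by (metis minus_diff_eq minus_divide_divide)
    show "\<forall>\<^sub>F y in at_left v. rd B v \<le> (B y - B v) / (y - v)"
      unfolding eventually_at_left_field eq using v by (auto intro!: exI[of _ 0] rd_lb[OF B])
    show "\<forall>\<^sub>F y in at_left v. (B y - B v) / (y - v) \<le> rd B y"
      unfolding eventually_at_left_field eq using v by (auto intro!: exI[of _ 0] rd_ub[OF B])
  qed
qed

lemma rd_ctble: assumes B: "concB B" shows "countable {v \<in> {0<..}. \<not> isCont (rd B) v}"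
proof -
  have m: "mono_on {0<..} (\<lambda>v. - rd B v)"
    by (rule mono_onI) (use rd_anti[OF B] in auto)
  have e: "isCont (\<lambda>v. - rd B v) v \<longleftrightarrow> isCont (rd B) v" for v
  proof
    assume "isCont (\<lambda>v. - rd B v) v"
    from isCont_minus[OF this] show "isCont (rd B) v" by simp
  qed (rule isCont_minus)
  show ?thesis using mono_on_ctble_discont_open[OF open_greaterThan m] by (simp add: e)
qed

lemma hat_repr:
  assumes L: "Lprops L" and x: "0 < x" and y: "0 < y"
  shows "L x y = (x + y) * hat L (x / (x + y))"
proof -
  have "L ((x+y) * (x/(x+y))) ((x+y) * (y/(x+y))) = (x+y) * L (x/(x+y)) (y/(x+y))"
    using x y by (intro LpD(7)[OF L]) auto
  moreover have "(x+y) * (x/(x+y)) = x" "(x+y) * (y/(x+y)) = y" using x y by auto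
  moreover have "1 - x/(x+y) = y/(x+y)" using x y by (simp add: field_simps)
  ultimately show ?thesis by (simp add: hat_def)
qed

lemma hat_deriv_at:
  assumes "hat L differentiable_on {0<..<1}" "0 < p" "p < 1"
  obtains D where "(hat L has_real_derivative D) (at p)"
proof -
  have "hat L differentiable at p"
    using assms differentiable_on_eq_differentiable_at[of "{0<..<1}" "hat L"] by auto
  then show ?thesis using that real_differentiable_def by blast
qed

lemma diff2:
  assumes L: "Lprops L" and H: "hat L differentiable_on {0<..<1}" and x: "0 < x" and y: "0 < y"
  shows "\<exists>D. ((\<lambda>y'. L x y') has_real_derivative D) (at y)"
proof -
  define p where "p = x / (x + y)"
  have p: "0 < p" "p < 1" using x y by (auto simp: p_def)
  obtain DH where DH: "(hat L has_real_derivative DH) (at p)" using hat_deriv_at[OF H p] by blast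
  have d1: "((\<lambda>y'. x / (x + y')) has_real_derivative (- x / (x + y)^2)) (at y)"
    using x y by (auto intro!: derivative_eq_intros simp: power2_eq_square)
  have d2: "((\<lambda>y'. hat L (x / (x + y'))) has_real_derivative DH * (- x / (x + y)^2)) (at y)"
    using DERIV_chain2[OF DH[unfolded p_def] d1] .
  have d0: "((\<lambda>y'. x + y') has_real_derivative 1) (at y)" by (auto intro!: derivative_eq_intros)
  have d3: "((\<lambda>y'. (x + y') * hat L (x / (x + y'))) has_real_derivative
      1 * hat L (x / (x + y)) + DH * (- x / (x + y)^2) * (x + y)) (at y)"
    using DERIV_mult[OF d0 d2] .
  have "((\<lambda>y'. L x y') has_real_derivative
      1 * hat L (x / (x + y)) + DH * (- x / (x + y)^2) * (x + y)) (at y)"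
    by (rule has_field_derivative_transform_within_open[OF d3 open_greaterThan[of 0]])
       (use y x hat_repr[OF L x] in auto)
  then show ?thesis by blast
qed

lemma diff1:
  assumes L: "Lprops L" and H: "hat L differentiable_on {0<..<1}" and x: "0 < x" and y: "0 \<le> y"
  shows "\<exists>D. ((\<lambda>x'. L x' y) has_real_derivative D) (at x)"
proof (cases "y = 0")
  case True
  have "((\<lambda>x'. (0::real)) has_real_derivative 0) (at x)" by simp
  then have "((\<lambda>x'. L x' y) has_real_derivative 0) (at x)"
    by (rule has_field_derivative_transform_within_open[OF _ open_greaterThan[of 0]])
       (use x True LpD(1)[OF L] in auto)
  then show ?thesis by blast
next
  case False
  then have y: "0 < y" using y by simp
  define p where "p = x / (x + y)"
  have p: "0 < p" "p < 1" using x y by (auto simp: p_def)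
  obtain DH where DH: "(hat L has_real_derivative DH) (at p)" using hat_deriv_at[OF H p] by blast
  have d1: "((\<lambda>x'. x' / (x' + y)) has_real_derivative (y / (x + y)^2)) (at x)"
    using x y by (auto intro!: derivative_eq_intros simp: power2_eq_square field_simps)
  have d2: "((\<lambda>x'. hat L (x' / (x' + y))) has_real_derivative DH * (y / (x + y)^2)) (at x)"
    using DERIV_chain2[OF DH[unfolded p_def] d1] .
  have d0: "((\<lambda>x'. x' + y) has_real_derivative 1) (at x)" by (auto intro!: derivative_eq_intros)
  have d3: "((\<lambda>x'. (x' + y) * hat L (x' / (x' + y))) has_real_derivative
      1 * hat L (x / (x + y)) + DH * (y / (x + y)^2) * (x + y)) (at x)"
    using DERIV_mult[OF d0 d2] .
  have "((\<lambda>x'. L x' y) has_real_derivative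
      1 * hat L (x / (x + y)) + DH * (y / (x + y)^2) * (x + y)) (at x)"
    by (rule has_field_derivative_transform_within_open[OF d3 open_greaterThan[of 0]])
       (use y x hat_repr[OF L _ y] in auto)
  then show ?thesis by blast
qed

lemma deriv_bounds:
  fixes f :: "real \<Rightarrow> real"
  assumes d: "(f has_real_derivative D) (at y)"
    and ev: "\<forall>\<^sub>F z in at_right y. lo \<le> (f z - f y) / (z - y) \<and> (f z - f y) / (z - y) \<le> hi"
  shows "lo \<le> D" "D \<le> hi"
proof -
  have "(f has_real_derivative D) (at y within {y<..})" using d by (rule has_field_derivative_at_within)
  then have t: "((\<lambda>z. (f z - f y) / (z - y)) \<longlongrightarrow> D) (at_right y)"
    unfolding has_field_derivative_iff .
  show "lo \<le> D" by (rule tendsto_lowerbound[OF t]) (use ev in \<open>auto elim: eventually_mono\<close>)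
  show "D \<le> hi" by (rule tendsto_upperbound[OF t]) (use ev in \<open>auto elim: eventually_mono\<close>)
qed

lemma a_side:
  assumes L: "Lprops L" and H: "hat L differentiable_on {0<..<1}" and x: "0 < x" and y: "0 < y"
  shows "((\<lambda>y'. L x y') has_real_derivative deriv (\<lambda>y'. L x y') y) (at y)"
    "0 \<le> deriv (\<lambda>y'. L x y') y" "deriv (\<lambda>y'. L x y') y \<le> 1"
proof -
  obtain D where D: "((\<lambda>y'. L x y') has_real_derivative D) (at y)" using diff2[OF L H x y] by blast
  then have dd: "deriv (\<lambda>y'. L x y') y = D" by (rule DERIV_imp_deriv)
  show "((\<lambda>y'. L x y') has_real_derivative deriv (\<lambda>y'. L x y') y) (at y)" using D dd by simp
  have ev: "\<forall>\<^sub>F z in at_right y. 0 \<le> (L x z - L x y) / (z - y) \<and> (L x z - L x y) / (z - y) \<le> 1"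
    unfolding eventually_at_right_field
  proof (intro exI[of _ "y+1"] conjI allI impI)
    fix z assume z: "y < z"
    have "L x y \<le> L x z" "L x z - L x y \<le> z - y" using LpD(5,6)[OF L, of x y z] x y z by auto
    then show "0 \<le> (L x z - L x y) / (z - y)" "(L x z - L x y) / (z - y) \<le> 1" using z by auto
  qed simp
  show "0 \<le> deriv (\<lambda>y'. L x y') y" "deriv (\<lambda>y'. L x y') y \<le> 1"
    using deriv_bounds[OF D ev] dd by auto
qed

lemma b_side:
  assumes L: "Lprops L" and w: "0 < w" and t: "0 < t" and c: "isCont (rd (\<lambda>x. L x 1)) (t / w)"
  shows "((\<lambda>x. L x w) has_real_derivative rd (\<lambda>x. L x 1) (t / w)) (at t)"
proof -
  define B where "B = (\<lambda>x. L x 1)"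
  have cB: "concB B" unfolding B_def by (rule Lp_concB[OF L])
  have tw: "0 < t / w" using t w by simp
  have d: "(B has_real_derivative rd B (t / w)) (at (t / w))" by (rule rd_deriv[OF cB tw c[folded B_def]])
  have d1: "((\<lambda>x. x / w) has_real_derivative 1 / w) (at t)" using w by (auto intro!: derivative_eq_intros)
  have d2: "((\<lambda>x. w * B (x / w)) has_real_derivative w * (rd B (t / w) * (1 / w))) (at t)"
    by (rule DERIV_cmult[OF DERIV_chain2[OF d d1]])
  have e: "w * (rd B (t / w) * (1 / w)) = rd B (t / w)" using w by simp
  show ?thesis unfolding B_def[symmetric]
  proof (rule has_field_derivative_transform_within_open[OF d2[unfolded e] open_greaterThan[of 0]])
    fix x :: real assume "x \<in> {0<..}"
    then have "L (w * (x / w)) (w * 1) = w * L (x / w) 1" using w by (intro LpD(7)[OF L]) auto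
    moreover have "w * (x / w) = x" using w by simp
    ultimately show "w * B (x / w) = L x w" by (simp add: B_def)
  qed (use t in simp)
qed

lemma deriv_seq:
  assumes "(f has_real_derivative D) (at x0)" "\<And>i. X i \<noteq> x0" "X \<longlonglongrightarrow> x0"
  shows "(\<lambda>i. (f (X i) - f x0) / (X i - x0)) \<longlonglongrightarrow> D"
proof -
  have "((\<lambda>y. (f y - f x0) / (y - x0)) \<longlongrightarrow> D) (at x0 within UNIV)"
    using assms(1) unfolding has_field_derivative_iff by simp
  then show ?thesis unfolding tendsto_at_iff_sequentially comp_def using assms(2,3) by auto
qed

lemma DCT_deriv:
  fixes F :: "real \<Rightarrow> real \<Rightarrow> real"
  assumes d: "0 < d"
    and meas: "\<And>x. F x \<in> borel_measurable lborel"
    and W: "integrable lborel W"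
    and F0: "integrable lborel (F x0)"
    and bound: "\<And>x r. \<bar>x - x0\<bar> < d \<Longrightarrow> \<bar>F x r - F x0 r\<bar> \<le> \<bar>x - x0\<bar> * W r"
    and der: "\<And>r. \<exists>D. ((\<lambda>x. F x r) has_real_derivative D) (at x0)"
  shows "\<exists>D. ((\<lambda>x. integral\<^sup>L lborel (F x)) has_real_derivative D) (at x0)"
proof -
  define D where "D r = deriv (\<lambda>x. F x r) x0" for r
  have dD: "((\<lambda>x. F x r) has_real_derivative D r) (at x0)" for r
  proof -
    obtain E where E: "((\<lambda>x. F x r) has_real_derivative E) (at x0)" using der[of r] by blast
    then have "D r = E" unfolding D_def by (rule DERIV_imp_deriv)
    then show ?thesis using E by simp
  qed
  define Y where "Y i = x0 + d / (Suc i + 1)" for i :: nat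
  have Yne: "Y i \<noteq> x0" for i using d by (simp add: Y_def)
  have Ylim: "Y \<longlonglongrightarrow> x0"
  proof -
    have "(\<lambda>i. d / (real (Suc i) + 1)) \<longlonglongrightarrow> 0"
    proof (intro tendsto_divide_0[OF tendsto_const])
      have "filterlim (\<lambda>i. 2 + real i) at_top sequentially"
        by (rule filterlim_tendsto_add_at_top[OF tendsto_const filterlim_real_sequentially])
      then show "filterlim (\<lambda>i. real (Suc i) + 1) at_infinity sequentially"
        by (simp add: filterlim_at_top_imp_at_infinity add.commute)
    qed
    then show ?thesis unfolding Y_def using tendsto_add[OF tendsto_const, of _ 0 sequentially x0] by simp
  qed
  have Dmeas: "D \<in> borel_measurable lborel"
    by (rule borel_measurable_LIMSEQ_real[OF deriv_seq[OF dD Yne Ylim]]) (use meas in auto)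
  have Fint: "integrable lborel (F x)" if "\<bar>x - x0\<bar> < d" for x
  proof -
    have "integrable lborel (\<lambda>r. F x0 r + (F x r - F x0 r))"
    proof (rule Bochner_Integration.integrable_add[OF F0])
      show "integrable lborel (\<lambda>r. F x r - F x0 r)"
        apply (rule Bochner_Integration.integrable_bound[of _ "\<lambda>r. \<bar>x - x0\<bar> * W r"])
        subgoal using W by simp
        subgoal using meas by simp
        subgoal by (intro AE_I2) (simp, rule order.trans[OF bound[OF that] abs_ge_self])
        done
    qed
    then show ?thesis by simp
  qed
  have "((\<lambda>x. (integral\<^sup>L lborel (F x) - integral\<^sup>L lborel (F x0)) / (x - x0)) \<longlongrightarrow> integral\<^sup>L lborel D) (at x0 within ball x0 d)"
    unfolding tendsto_at_iff_sequentially
  proof (intro allI impI)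
    fix X assume X: "\<forall>i. X i \<in> ball x0 d - {x0}" and Xl: "X \<longlonglongrightarrow> x0"
    have Xd: "\<bar>X i - x0\<bar> < d" "X i \<noteq> x0" for i using X by (auto simp: dist_real_def abs_minus_commute)
    have eq: "(integral\<^sup>L lborel (F (X i)) - integral\<^sup>L lborel (F x0)) / (X i - x0) =
        integral\<^sup>L lborel (\<lambda>r. (F (X i) r - F x0 r) / (X i - x0))" for i
      using Fint[OF Xd(1)] F0 by simp
    have "(\<lambda>i. integral\<^sup>L lborel (\<lambda>r. (F (X i) r - F x0 r) / (X i - x0))) \<longlonglongrightarrow> integral\<^sup>L lborel D"
    proof (rule integral_dominated_convergence[OF Dmeas _ W])
      show "\<And>i. (\<lambda>r. (F (X i) r - F x0 r) / (X i - x0)) \<in> borel_measurable lborel" using meas by auto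
      show "AE r in lborel. (\<lambda>i. (F (X i) r - F x0 r) / (X i - x0)) \<longlonglongrightarrow> D r"
        using deriv_seq[OF dD Xd(2) Xl] by simp
      show "AE r in lborel. norm ((F (X i) r - F x0 r) / (X i - x0)) \<le> W r" for i
      proof (intro AE_I2)
        fix r
        have "\<bar>F (X i) r - F x0 r\<bar> \<le> \<bar>X i - x0\<bar> * W r" by (rule bound[OF Xd(1)])
        then show "norm ((F (X i) r - F x0 r) / (X i - x0)) \<le> W r"
          using Xd(2)[of i] by (simp add: abs_divide divide_le_eq mult.commute)
      qed
    qed
    then show "((\<lambda>x. (integral\<^sup>L lborel (F x) - integral\<^sup>L lborel (F x0)) / (x - x0)) \<circ> X) \<longlonglongrightarrow> integral\<^sup>L lborel D"
      unfolding comp_def eq .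
  qed
  then have "((\<lambda>x. integral\<^sup>L lborel (F x)) has_real_derivative integral\<^sup>L lborel D) (at x0 within ball x0 d)"
    unfolding has_field_derivative_iff .
  then have "((\<lambda>x. integral\<^sup>L lborel (F x)) has_real_derivative integral\<^sup>L lborel D) (at x0)"
    using at_within_open[of x0 "ball x0 d"] d by simp
  then show ?thesis by blast
qed

definition eta :: "(real \<Rightarrow> real) \<Rightarrow> real \<Rightarrow> real" where
  "eta G r = (if {v. 0 < v \<and> r < G v} = {} then 0 else Sup {v. 0 < v \<and> r < G v})"

lemma eta_ne: "{v. 0 < v \<and> r < G v} \<noteq> {} \<Longrightarrow> eta G r = Sup {v. 0 < v \<and> r < G v}"
  unfolding eta_def by (rule if_not_P)

lemma eta_e: "{v. 0 < v \<and> r < G v} = {} \<Longrightarrow> eta G r = 0"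
  unfolding eta_def by (rule if_P)

lemma eta_bdd: assumes B: "concB B" and r: "0 < r"
  shows "bdd_above {v. 0 < v \<and> r < rd B v}"
proof (rule bdd_aboveI[of _ "1 / r"])
  fix v assume "v \<in> {v. 0 < v \<and> r < rd B v}"
  then have v: "0 < v" "r < rd B v" by auto
  then have "r < 1 / v" using rd_small[OF B v(1)] by linarith
  then have "r * v < 1" using v by (simp add: field_simps)
  then show "v \<le> 1 / r" using r by (simp add: field_simps)
qed

lemma eta_nonneg: assumes B: "concB B" and r: "0 < r" shows "0 \<le> eta (rd B) r"
proof (cases "{v. 0 < v \<and> r < rd B v} = {}")
  case False
  then obtain v where v: "0 < v" "r < rd B v" by auto
  have "v \<le> Sup {v. 0 < v \<and> r < rd B v}" by (rule cSup_upper[OF _ eta_bdd[OF B r]]) (use v in auto)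
  then show ?thesis using v eta_ne[OF False] by simp
qed (simp add: eta_e)

lemma eta_iff: assumes B: "concB B" and r: "0 < r" and v: "0 < v" "v \<noteq> eta (rd B) r"
  shows "r < rd B v \<longleftrightarrow> v < eta (rd B) r"
proof
  assume h: "r < rd B v"
  then have ne: "{v. 0 < v \<and> r < rd B v} \<noteq> {}" using v by auto
  have "v \<le> Sup {v. 0 < v \<and> r < rd B v}" by (rule cSup_upper[OF _ eta_bdd[OF B r]]) (use v h in auto)
  then show "v < eta (rd B) r" using v eta_ne[OF ne] by simp
next
  assume h: "v < eta (rd B) r"
  have ne: "{v. 0 < v \<and> r < rd B v} \<noteq> {}"
  proof
    assume "{v. 0 < v \<and> r < rd B v} = {}"
    then show False using h v eta_e[of r "rd B"] by simp
  qed
  then have "v < Sup {v. 0 < v \<and> r < rd B v}" using h eta_ne[OF ne] by simp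
  then obtain v' where v': "v' \<in> {v. 0 < v \<and> r < rd B v}" "v < v'"
    using less_cSupE[OF _ ne] by blast
  then show "r < rd B v" using rd_anti[OF B, of v v'] by auto
qed

lemma eta_anti: assumes B: "concB B" and r: "0 < r1" "r1 \<le> r2"
  shows "eta (rd B) r2 \<le> eta (rd B) r1"
proof (cases "{v. 0 < v \<and> r2 < rd B v} = {}")
  case True
  then show ?thesis using eta_nonneg[OF B r(1)] eta_e[OF True] by simp
next
  case False
  have sub: "{v. 0 < v \<and> r2 < rd B v} \<subseteq> {v. 0 < v \<and> r1 < rd B v}" using r by auto
  then have ne: "{v. 0 < v \<and> r1 < rd B v} \<noteq> {}" using False by auto
  have "Sup {v. 0 < v \<and> r2 < rd B v} \<le> Sup {v. 0 < v \<and> r1 < rd B v}"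
    by (rule cSup_subset_mono[OF False eta_bdd[OF B r(1)] sub])
  then show ?thesis using eta_ne[OF False] eta_ne[OF ne] by simp
qed

lemma rd_meas: assumes B: "concB B" shows "rd B \<in> borel_measurable borel"
proof -
  have "mono (\<lambda>v. - rd B v)" by (rule monoI) (use rd_anti[OF B] in auto)
  then have "(\<lambda>v. - rd B v) \<in> borel_measurable borel" by (rule borel_measurable_mono)
  then have "(\<lambda>v. - (- rd B v)) \<in> borel_measurable borel" by measurable
  then show ?thesis by simp
qed

lemma eta_meas:
  fixes h :: "real \<Rightarrow> real"
  assumes B: "concB B" and h: "continuous_on UNIV h"
  shows "(\<lambda>r. indicator {0<..<1} r * h (eta (rd B) r)) \<in> borel_measurable lborel"
proof -
  have "mono_on {0<..<1} (\<lambda>r. - eta (rd B) r)"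
    by (rule mono_onI) (use eta_anti[OF B] in auto)
  then have m: "(\<lambda>r. - eta (rd B) r) \<in> borel_measurable (restrict_space borel {0<..<1})"
    by (rule borel_measurable_mono_on_fnc)
  have hc: "continuous_on UNIV (\<lambda>y. h (- y))"
    by (rule continuous_on_compose2[OF h]) (auto intro: continuous_intros)
  have "(\<lambda>r. h (- (- eta (rd B) r))) \<in> borel_measurable (restrict_space borel {0<..<1})"
    by (rule borel_measurable_continuous_on[OF hc m])
  then have "(\<lambda>r. if r \<in> {0<..<1} then h (eta (rd B) r) else 0) \<in> borel_measurable borel"
    by (subst measurable_restrict_space_iff[symmetric]) auto
  moreover have "(\<lambda>r. indicator {0<..<1} r * h (eta (rd B) r)) = (\<lambda>r. if r \<in> {0<..<1} then h (eta (rd B) r) else 0)"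
    by (rule ext) (simp add: indicator_def)
  ultimately show ?thesis by simp
qed

lemma core_identity:
  assumes L1: "Lprops L1" and L2: "Lprops L2" and H: "hat L1 differentiable_on {0<..<1}"
    and s: "0 < s" "s < 1"
  shows "markov_prod L1 L2 s (1 - s) =
    (1 - s) * (\<integral>r. indicator {0<..<1} r * L1 (s / (1 - s)) (eta (rd (\<lambda>x. L2 x 1)) r) \<partial>lborel)"
proof -
  define w where "w = 1 - s"
  have w: "0 < w" using s by (simp add: w_def)
  define B where "B = (\<lambda>x. L2 x 1)"
  have cB: "concB B" unfolding B_def by (rule Lp_concB[OF L2])
  define G where "G = rd B"
  define a where "a t = deriv (\<lambda>y. L1 s y) t" for t
  define A where "A t = indicator {0<..} t * a t" for t
  define Nd where "Nd = {v \<in> {0<..}. \<not> isCont G v}"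
  have Ndc: "countable Nd" unfolding Nd_def G_def by (rule rd_ctble[OF cB])
  define X where "X = (\<lambda>v. w * v) ` Nd"
  have Xc: "countable X" unfolding X_def using Ndc by simp
  have G0: "0 \<le> G v" for v unfolding G_def by (rule rd_ge0[OF cB])
  have G1: "G v \<le> 1" for v unfolding G_def by (rule rd_le1[OF cB])
  have aD: "((\<lambda>y. L1 s y) has_real_derivative a t) (at t)" if "0 < t" for t
    unfolding a_def by (rule a_side(1)[OF L1 H s(1) that])
  have a0: "0 \<le> a t" if "0 < t" for t unfolding a_def by (rule a_side(2)[OF L1 H s(1) that])
  have A0: "0 \<le> A t" for t using a0[of t] by (auto simp: A_def indicator_def)
  have S1: "markov_prod L1 L2 s w = (\<integral>t. A t * G (t / w) \<partial>lborel)"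
    unfolding markov_prod_def set_lebesgue_integral_def
  proof (rule integral_discrete_difference[OF Xc])
    show "\<And>x. x \<in> X \<Longrightarrow> emeasure lborel {x} = 0" by simp
    show "\<And>x. x \<in> X \<Longrightarrow> {x} \<in> sets lborel" by simp
    fix t assume t: "t \<notin> X"
    show "indicator {0<..} t *\<^sub>R (deriv (\<lambda>y. L1 s y) t * deriv (\<lambda>x. L2 x w) t) = A t * G (t / w)"
    proof (cases "0 < t")
      case True
      have "t / w \<notin> Nd"
      proof
        assume "t / w \<in> Nd"
        then have "w * (t / w) \<in> X" unfolding X_def by blast
        then show False using t w by simp
      qed
      then have "isCont G (t / w)" using True w by (auto simp: Nd_def)
      then have "isCont (rd (\<lambda>x. L2 x 1)) (t / w)" by (simp add: G_def B_def)
      from DERIV_imp_deriv[OF b_side[OF L2 w True this]]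
      have "deriv (\<lambda>x. L2 x w) t = G (t / w)" by (simp add: G_def B_def)
      then show ?thesis by (simp add: A_def a_def True)
    qed (simp add: A_def)
  qed
  define Lc where "Lc y = L1 s (max 0 y)" for y
  have Lcc: "continuous_on UNIV Lc" unfolding Lc_def
    by (rule continuous_on_compose2[OF Lp_cont2[OF L1] continuous_on_max[OF continuous_on_const continuous_on_id]])
       (use s in auto)
  have Lcm[measurable]: "Lc \<in> borel_measurable borel" by (rule borel_measurable_continuous_onI[OF Lcc])
  have Ameas[measurable]: "A \<in> borel_measurable borel"
  proof -
    define u where "u n t = indicator {0<..} t * ((Lc (t + 1 / Suc n) - Lc t) / ((t + 1 / Suc n) - t))" for n :: nat and t :: real
    show ?thesis
    proof (rule borel_measurable_LIMSEQ_real[of _ u])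
      fix t :: real
      show "(\<lambda>n. u n t) \<longlonglongrightarrow> A t"
      proof (cases "0 < t")
        case True
        have l: "(\<lambda>n. 1 / real (Suc n)) \<longlonglongrightarrow> 0" using LIMSEQ_Suc[OF lim_1_over_n] by simp
        have Xl: "(\<lambda>n. t + 1 / real (Suc n)) \<longlonglongrightarrow> t" using tendsto_add[OF tendsto_const l, of t] by simp
        have ne: "t + 1 / real (Suc n) \<noteq> t" for n by simp
        have c: "(\<lambda>n. (L1 s (t + 1 / real (Suc n)) - L1 s t) / ((t + 1 / real (Suc n)) - t)) \<longlonglongrightarrow> a t"
          by (rule deriv_seq[OF aD[OF True] ne Xl])
        have "u n t = (L1 s (t + 1 / real (Suc n)) - L1 s t) / ((t + 1 / real (Suc n)) - t)" for n
        proof -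
          have "0 \<le> t + 1 / real (Suc n)" using True by (simp add: add_nonneg_nonneg)
          then show ?thesis using True by (simp add: u_def Lc_def)
        qed
        then show ?thesis using c True by (simp add: A_def)
      qed (simp add: u_def A_def)
    next
      fix n show "u n \<in> borel_measurable borel" unfolding u_def by measurable
    qed
  qed
  have Gmeas[measurable]: "G \<in> borel_measurable borel" unfolding G_def by (rule rd_meas[OF cB])
  have S2: "(\<integral>t. A t * G (t / w) \<partial>lborel) = enn2real (\<integral>\<^sup>+ t. ennreal (A t * G (t / w)) \<partial>lborel)"
    by (rule integral_eq_nn_integral) (use A0 G0 in auto)
  have S3: "(\<integral>\<^sup>+ t. ennreal (A t * G (t / w)) \<partial>lborel) =
      (\<integral>\<^sup>+ t. (\<integral>\<^sup>+ r. ennreal (A t * (if 0 < r \<and> r < G (t / w) then 1 else 0)) \<partial>lborel) \<partial>lborel)"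
  proof (rule nn_integral_cong)
    fix t :: real
    have "(\<integral>\<^sup>+ r. ennreal (A t * (if 0 < r \<and> r < G (t / w) then 1 else 0)) \<partial>lborel)
        = (\<integral>\<^sup>+ r. ennreal (A t) * indicator {0<..<G (t / w)} r \<partial>lborel)"
      by (rule nn_integral_cong) (auto simp: indicator_def)
    also have "\<dots> = ennreal (A t) * emeasure lborel {0<..<G (t / w)}" by (rule nn_integral_cmult_indicator) simp
    also have "\<dots> = ennreal (A t * G (t / w))" using G0[of "t / w"] A0[of t] by (simp add: ennreal_mult)
    finally show "ennreal (A t * G (t / w)) = (\<integral>\<^sup>+ r. ennreal (A t * (if 0 < r \<and> r < G (t / w) then 1 else 0)) \<partial>lborel)"
      by simp
  qed
  have S4: "(\<integral>\<^sup>+ t. (\<integral>\<^sup>+ r. ennreal (A t * (if 0 < r \<and> r < G (t / w) then 1 else 0)) \<partial>lborel) \<partial>lborel)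
      = (\<integral>\<^sup>+ r. (\<integral>\<^sup>+ t. ennreal (A t * (if 0 < r \<and> r < G (t / w) then 1 else 0)) \<partial>lborel) \<partial>lborel)"
    by (rule lborel_pair.Fubini'[symmetric]) measurable
  have S5: "(\<integral>\<^sup>+ t. ennreal (A t * (if 0 < r \<and> r < G (t / w) then 1 else 0)) \<partial>lborel)
      = ennreal (indicator {0<..<1} r * L1 s (w * eta G r))" for r
  proof (cases "0 < r \<and> r < 1")
    case False
    have z: "ennreal (A t * (if 0 < r \<and> r < G (t / w) then 1 else 0)) = 0" for t
      using False G1[of "t / w"] by auto
    show ?thesis using False by (simp add: z)
  next
    case True
    have r: "0 < r" "r < 1" using True by auto
    define c where "c = w * eta G r"
    have eta0: "0 \<le> eta G r" unfolding G_def by (rule eta_nonneg[OF cB r(1)])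
    have c0: "0 \<le> c" using w eta0 by (simp add: c_def)
    have ae: "AE t in lborel. ennreal (A t * (if 0 < r \<and> r < G (t / w) then 1 else 0))
        = ennreal (indicator {0<..<c} t * a t)"
      using AE_lborel_singleton[of c]
    proof eventually_elim
      case (elim t)
      show ?case
      proof (cases "0 < t")
        case True
        have tw: "0 < t / w" using True w by simp
        have ne: "t / w \<noteq> eta G r"
        proof
          assume "t / w = eta G r"
          then have "t = c" using w by (simp add: c_def field_simps)
          then show False using elim by simp
        qed
        have "r < G (t / w) \<longleftrightarrow> t / w < eta G r"
          unfolding G_def by (rule eta_iff[OF cB r(1) tw ne[unfolded G_def]])
        also have "\<dots> \<longleftrightarrow> t < c" using w by (simp add: c_def divide_less_eq mult.commute)
        finally show ?thesis using True r by (simp add: A_def indicator_def)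
      qed (simp add: A_def)
    qed
    have "(\<integral>\<^sup>+ t. ennreal (A t * (if 0 < r \<and> r < G (t / w) then 1 else 0)) \<partial>lborel)
        = (\<integral>\<^sup>+ t. ennreal (indicator {0<..<c} t * a t) \<partial>lborel)" by (rule nn_integral_cong_AE[OF ae])
    also have "\<dots> = ennreal (L1 s c)"
    proof -
      have fi: "(a has_integral (L1 s c - L1 s 0)) {0..c}"
      proof (rule fundamental_theorem_of_calculus_interior[OF c0])
        show "continuous_on {0..c} (\<lambda>y. L1 s y)"
          by (rule continuous_on_subset[OF Lp_cont2[OF L1]]) (use s in auto)
        fix x assume "x \<in> {0<..<c}"
        then show "((\<lambda>y. L1 s y) has_vector_derivative a x) (at x)"
          using aD[of x] by (simp add: has_real_derivative_iff_has_vector_derivative)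
      qed
      have fi2: "(a has_integral L1 s c) {0<..<c}"
        using fi LpD(1)[OF L1, of s] s by (simp add: has_integral_Icc_iff_Ioo)
      show ?thesis using nn_integral_has_integral_lebesgue[OF _ fi2] a0 by simp
    qed
    finally show ?thesis using r by (simp add: indicator_def c_def)
  qed
  have S6: "(\<integral>\<^sup>+ t. ennreal (A t * G (t / w)) \<partial>lborel) = (\<integral>\<^sup>+ r. ennreal (indicator {0<..<1} r * L1 s (w * eta G r)) \<partial>lborel)"
    using S3 S4 S5 by simp
  have eta0: "0 \<le> eta G r" if "r \<in> {0<..<1}" for r unfolding G_def by (rule eta_nonneg[OF cB]) (use that in auto)
  define h where "h y = L1 s (w * max 0 y)" for y
  have hc: "continuous_on UNIV h" unfolding h_def
    by (rule continuous_on_compose2[OF Lp_cont2[OF L1]]) (use s w in \<open>auto intro!: continuous_intros\<close>)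
  have fe: "(\<lambda>r. indicator {0<..<1} r * L1 s (w * eta G r)) = (\<lambda>r. indicator {0<..<1} r * h (eta G r))"
    by (rule ext) (auto simp: h_def indicator_def eta0)
  have fm: "(\<lambda>r. indicator {0<..<1} r * L1 s (w * eta G r)) \<in> borel_measurable lborel"
  proof -
    have "(\<lambda>r. indicator {0<..<1} r * h (eta (rd B) r)) \<in> borel_measurable lborel" by (rule eta_meas[OF cB hc])
    then show ?thesis using fe by (simp add: G_def)
  qed
  have nn: "0 \<le> indicator {0<..<1} r * L1 s (w * eta G r)" for r
    using Lp_nonneg[OF L1, of s "w * eta G r"] eta0[of r] s w by (auto simp: indicator_def)
  have S8: "(\<integral>r. indicator {0<..<1} r * L1 s (w * eta G r) \<partial>lborel)
      = enn2real (\<integral>\<^sup>+ r. ennreal (indicator {0<..<1} r * L1 s (w * eta G r)) \<partial>lborel)"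
    by (rule integral_eq_nn_integral[OF fm]) (use nn in auto)
  have S9: "indicator {0<..<1} r * L1 s (w * eta G r) = w * (indicator {0<..<1} r * L1 (s / w) (eta G r))" for r
  proof (cases "r \<in> {0<..<1}")
    case True
    have "L1 (w * (s / w)) (w * eta G r) = w * L1 (s / w) (eta G r)"
      using LpD(7)[OF L1, of w "s / w" "eta G r"] w s eta0[OF True] by simp
    then show ?thesis using w True by simp
  qed simp
  have "markov_prod L1 L2 s w = (\<integral>r. indicator {0<..<1} r * L1 s (w * eta G r) \<partial>lborel)"
    using S1 S2 S6 S8 by simp
  also have "\<dots> = w * (\<integral>r. indicator {0<..<1} r * L1 (s / w) (eta G r) \<partial>lborel)"
    unfolding S9 by simp
  finally show ?thesis by (simp add: w_def G_def B_def)
qed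

lemma R_diff:
  assumes L1: "Lprops L1" and H: "hat L1 differentiable_on {0<..<1}" and cB: "concB B" and x0: "0 < x0"
  shows "\<exists>D. ((\<lambda>x. \<integral>r. indicator {0<..<1} r * L1 x (eta (rd B) r) \<partial>lborel) has_real_derivative D) (at x0)"
proof -
  define G where "G = rd B"
  have eta0: "0 \<le> eta G r" if "r \<in> {0<..<1}" for r unfolding G_def by (rule eta_nonneg[OF cB]) (use that in auto)
  define F where "F x r = indicator {0<..<1} r * L1 (max 0 x) (eta G r)" for x r
  have Fm: "F x \<in> borel_measurable lborel" for x
  proof -
    define h where "h y = L1 (max 0 x) (max 0 y)" for y
    have hc: "continuous_on UNIV h" unfolding h_def
      by (rule continuous_on_compose2[OF Lp_cont2[OF L1]]) (auto intro!: continuous_intros)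
    have fe: "F x = (\<lambda>r. indicator {0<..<1} r * h (eta G r))"
      by (rule ext) (auto simp: F_def h_def indicator_def eta0)
    show ?thesis unfolding fe G_def by (rule eta_meas[OF cB hc])
  qed
  have W: "integrable lborel (indicator {0<..<1} :: real \<Rightarrow> real)"
    by (rule integrable_real_indicator) auto
  have F0: "integrable lborel (F x0)"
  proof (rule Bochner_Integration.integrable_bound[of _ "\<lambda>r::real. x0 * indicator {0<..<1} r"])
    show "integrable lborel (\<lambda>r::real. x0 * indicator {0<..<1} r :: real)" using W by simp
    show "F x0 \<in> borel_measurable lborel" by (rule Fm)
    show "AE r in lborel. norm (F x0 r) \<le> norm (x0 * indicator {0<..<1} r)"
    proof (intro AE_I2)
      fix r
      show "norm (F x0 r) \<le> norm (x0 * indicator {0<..<1} r)"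
      proof (cases "r \<in> {0<..<1}")
        case True
        have "L1 x0 (eta G r) - L1 0 (eta G r) \<le> x0 - 0" using LpD(4)[OF L1, of 0 x0 "eta G r"] x0 eta0[OF True] by simp
        moreover have "L1 0 (eta G r) = 0" using LpD(2)[OF L1] eta0[OF True] by simp
        moreover have "0 \<le> L1 x0 (eta G r)" using Lp_nonneg[OF L1] x0 eta0[OF True] by simp
        ultimately show ?thesis using True x0 by (simp add: F_def)
      qed (simp add: F_def)
    qed
  qed
  have bound: "\<bar>F x r - F x0 r\<bar> \<le> \<bar>x - x0\<bar> * indicator {0<..<1} r" if "\<bar>x - x0\<bar> < x0" for x r
  proof (cases "r \<in> {0<..<1}")
    case True
    have "0 < x" using that by linarith
    then show ?thesis using Lp_abs1[OF L1, of x0 x "eta G r"] x0 eta0[OF True] True by (simp add: F_def)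
  qed (simp add: F_def)
  have der: "\<exists>D. ((\<lambda>x. F x r) has_real_derivative D) (at x0)" for r
  proof (cases "r \<in> {0<..<1}")
    case True
    obtain D where D: "((\<lambda>x. L1 x (eta G r)) has_real_derivative D) (at x0)"
      using diff1[OF L1 H x0 eta0[OF True]] by blast
    have "((\<lambda>x. F x r) has_real_derivative D) (at x0)"
      by (rule has_field_derivative_transform_within_open[OF D open_greaterThan[of 0]])
         (use x0 True in \<open>auto simp: F_def\<close>)
    then show ?thesis by blast
  next
    case False
    then have "(\<lambda>x. F x r) = (\<lambda>x. 0)" by (auto simp: F_def)
    moreover have "((\<lambda>x. 0::real) has_real_derivative 0) (at x0)" by simp
    ultimately show ?thesis by metis
  qed
  obtain D where D: "((\<lambda>x. integral\<^sup>L lborel (F x)) has_real_derivative D) (at x0)"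
    using DCT_deriv[OF x0 Fm W F0 bound der] by blast
  have "((\<lambda>x. \<integral>r. indicator {0<..<1} r * L1 x (eta (rd B) r) \<partial>lborel) has_real_derivative D) (at x0)"
  proof (rule has_field_derivative_transform_within_open[OF D open_greaterThan[of 0]])
    fix x :: real assume "x \<in> {0<..}"
    then have "0 < x" by simp
    then have "F x = (\<lambda>r. indicator {0<..<1} r * L1 x (eta (rd B) r))" by (intro ext) (simp add: F_def G_def)
    then show "integral\<^sup>L lborel (F x) = (\<integral>r. indicator {0<..<1} r * L1 x (eta (rd B) r) \<partial>lborel)"
      by simp
  qed (use x0 in simp)
  then show ?thesis by blast
qed

lemma case1:
  assumes L1: "Lprops L1" and L2: "Lprops L2" and H: "hat L1 differentiable_on {0<..<1}"
  shows "hat (markov_prod L1 L2) differentiable_on {0<..<1}"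
proof (rule differentiable_at_imp_differentiable_on)
  fix s :: real assume "s \<in> {0<..<1}"
  then have s: "0 < s" "s < 1" by auto
  define B where "B = (\<lambda>x. L2 x 1)"
  have cB: "concB B" unfolding B_def by (rule Lp_concB[OF L2])
  define R where "R x = (\<integral>r. indicator {0<..<1} r * L1 x (eta (rd B) r) \<partial>lborel)" for x
  have x0: "0 < s / (1 - s)" using s by simp
  obtain D where D: "(R has_real_derivative D) (at (s / (1 - s)))"
    using R_diff[OF L1 H cB x0] unfolding R_def by blast
  have d1: "((\<lambda>s. s / (1 - s)) has_real_derivative (1 / (1 - s)^2)) (at s)"
    using s by (auto intro!: derivative_eq_intros simp: power2_eq_square field_simps)
  have d2: "((\<lambda>s. R (s / (1 - s))) has_real_derivative D * (1 / (1 - s)^2)) (at s)"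
    by (rule DERIV_chain2[OF D d1])
  have d0: "((\<lambda>s. 1 - s) has_real_derivative -1) (at s)" by (auto intro!: derivative_eq_intros)
  have d3: "((\<lambda>s. (1 - s) * R (s / (1 - s))) has_real_derivative
      (-1) * R (s / (1 - s)) + D * (1 / (1 - s)^2) * (1 - s)) (at s)"
    using DERIV_mult[OF d0 d2] .
  have "(hat (markov_prod L1 L2) has_real_derivative
      (-1) * R (s / (1 - s)) + D * (1 / (1 - s)^2) * (1 - s)) (at s)"
  proof (rule has_field_derivative_transform_within_open[OF d3 open_greaterThanLessThan[of 0 1]])
    fix x :: real assume "x \<in> {0<..<1}"
    then show "(1 - x) * R (x / (1 - x)) = hat (markov_prod L1 L2) x"
      using core_identity[OF L1 L2 H, of x] by (simp add: hat_def R_def B_def)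
  qed (use s in simp)
  then show "hat (markov_prod L1 L2) differentiable at s" using real_differentiable_def by blast
qed

lemma diff_flip:
  fixes f :: "real \<Rightarrow> real"
  assumes "f differentiable_on {0<..<1::real}"
  shows "(\<lambda>t. f (1 - t)) differentiable_on {0<..<1}"
proof (rule differentiable_at_imp_differentiable_on)
  fix t :: real assume t: "t \<in> {0<..<1}"
  then have "f differentiable at (1 - t)"
    using assms differentiable_on_eq_differentiable_at[of "{0<..<1}" f] by auto
  then obtain D where D: "(f has_real_derivative D) (at (1 - t))" using real_differentiable_def by blast
  have d1: "((\<lambda>t. 1 - t) has_real_derivative -1) (at t)" by (auto intro!: derivative_eq_intros)
  have "((\<lambda>t. f (1 - t)) has_real_derivative D * -1) (at t)" by (rule DERIV_chain2[OF D d1])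
  then show "(\<lambda>t. f (1 - t)) differentiable at t" using real_differentiable_def by blast
qed

theorem mainTheorem8:
  assumes "L1 \<in> M2" and "L2 \<in> M2"
    and "hat L1 differentiable_on {0<..<1} \<or> hat L2 differentiable_on {0<..<1}"
  shows "hat (markov_prod L1 L2) differentiable_on {0<..<1}"
proof -
  have L1: "Lprops L1" and L2: "Lprops L2" using assms(1,2) by (auto intro: M2_Lprops)
  show ?thesis
  proof (cases "hat L1 differentiable_on {0<..<1}")
    case True
    then show ?thesis by (rule case1[OF L1 L2])
  next
    case False
    then have H2: "hat L2 differentiable_on {0<..<1}" using assms(3) by blast
    have H2': "hat (\<lambda>x y. L2 y x) differentiable_on {0<..<1}"
    proof -
      have e2: "hat (\<lambda>x y. L2 y x) = (\<lambda>t. hat L2 (1 - t))" by (rule ext) (simp add: hat_def)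
      show ?thesis by (subst e2) (rule diff_flip[OF H2])
    qed
    have c: "hat (markov_prod (\<lambda>x y. L2 y x) (\<lambda>x y. L1 y x)) differentiable_on {0<..<1}"
      by (rule case1[OF Lprops_transp[OF L2] Lprops_transp[OF L1] H2'])
    have e: "hat (markov_prod L1 L2) = (\<lambda>t. hat (markov_prod (\<lambda>x y. L2 y x) (\<lambda>x y. L1 y x)) (1 - t))"
    proof (rule ext)
      fix t :: real
      have tt: "1 - (1 - t) = t" by simp
      show "hat (markov_prod L1 L2) t = hat (markov_prod (\<lambda>x y. L2 y x) (\<lambda>x y. L1 y x)) (1 - t)"
        unfolding hat_def markov_prod_def tt by (simp only: mult.commute)
    qed
    show ?thesis unfolding e by (rule diff_flip[OF c])
  qed
qed

end
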